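(* Define $${\cal D}_0:=\{\mu\in{\cal S}:{\cal F}^n(\mu)\Rightarrow\delta_{\underline0}\text{ as }n\to\infty\},\qquad \widehat{\cal D}_0:=\{\mu\in{\cal S}:\widehat{\cal F}^n(\mu)\Rightarrow\delta_{\underline0}\text{ as }n\to\infty\}.$$ Then ${\cal D}_0$ and $\widehat{\cal D}_0$ are open, dense subsets of ${\cal S}$.
   Context: **Spaces.** $S=\{0,1\}^{\mathbb N}$ with $\mathbb N=\{0,1,\dots\}$, equipped with the product topology. ${\cal M}$ is the set of Borel probability laws on $S$ with the topology of weak convergence (denoted $\Rightarrow$). ${\cal S}\subset{\cal M}$ is the set of shift-invariant (stationary) laws, with the relative topology. $\underline0\in S$ is the all-zero configuration and $\delta_{\underline0}$ the point mass on it. **Column maps.** $\Phi_{\rm A}(y,z)(k)=y(k)\wedge z(k)$ and $\Phi_{\rm b}(y)(k)=y(k)\vee y(k+1)$. For $\mu\in{\cal M}$, ${\cal F}_{\rm A}(\mu)$ is the law of $\Phi_{\rm A}(Y,Z)$ and ${\cal F}_{\rm b}(\mu)$ is the law of $\Phi_{\rm b}(Y)$, where $Y,Z$ are independent with law $\mu$. ${\cal F}={\cal F}_{\rm A}\circ{\cal F}_{\rm b}$, $\widehat{\cal F}={\cal F}_{\rm b}\circ{\cal F}_{\rm A}$, and ${\cal F}^n$ and $\widehat{\cal F}^n$ denote $n$-fold iterates. *)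

theory Defs
  imports "HOL-Probability.Probability"
begin

text \<open>Configuration space S = {0,1}^N, encoded as nat => bool with the product
topology (Function_Topology instance; bool carries the discrete topology).
Laws are Borel probability measures on it.\<close>

type_synonym config = "nat \<Rightarrow> bool"

definition laws :: "config measure set" where
  "laws = {\<mu>. sets \<mu> = sets (borel :: config measure) \<and> prob_space \<mu>}"

definition shift :: "config \<Rightarrow> config" where
  "shift y = (\<lambda>k. y (Suc k))"

definition stationary_laws :: "config measure set" where
  "stationary_laws = {\<mu> \<in> laws. distr \<mu> borel shift = \<mu>}"

definition bdd_cont :: "(config \<Rightarrow> real) \<Rightarrow> bool" where
  "bdd_cont f \<longleftrightarrow> continuous_on UNIV f \<and> bounded (range f)"

definition weak_conv :: "(nat \<Rightarrow> config measure) \<Rightarrow> config measure \<Rightarrow> bool" where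
  "weak_conv \<mu>s \<mu> \<longleftrightarrow>
     (\<forall>f. bdd_cont f \<longrightarrow> (\<lambda>n. \<integral>x. f x \<partial>(\<mu>s n)) \<longlonglongrightarrow> (\<integral>x. f x \<partial>\<mu>))"

definition weak_topology :: "config measure topology" where
  "weak_topology = topology_generated_by
     {{\<mu> \<in> laws. (\<integral>x. f x \<partial>\<mu>) \<in> U} | f U. bdd_cont f \<and> open U}"

definition Phi_A :: "config \<Rightarrow> config \<Rightarrow> config" where
  "Phi_A y z = (\<lambda>k. y k \<and> z k)"

definition Phi_b :: "config \<Rightarrow> config" where
  "Phi_b y = (\<lambda>k. y k \<or> y (Suc k))"

definition F_A :: "config measure \<Rightarrow> config measure" where
  "F_A \<mu> = distr (\<mu> \<Otimes>\<^sub>M \<mu>) borel (\<lambda>(y, z). Phi_A y z)"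

definition F_b :: "config measure \<Rightarrow> config measure" where
  "F_b \<mu> = distr \<mu> borel Phi_b"

definition F :: "config measure \<Rightarrow> config measure" where
  "F = F_A \<circ> F_b"

definition F_hat :: "config measure \<Rightarrow> config measure" where
  "F_hat = F_b \<circ> F_A"

definition delta0 :: "config measure" where
  "delta0 = return borel (\<lambda>_. False)"

definition D0 :: "config measure set" where
  "D0 = {\<mu> \<in> stationary_laws. weak_conv (\<lambda>n. (F ^^ n) \<mu>) delta0}"

definition D0_hat :: "config measure set" where
  "D0_hat = {\<mu> \<in> stationary_laws. weak_conv (\<lambda>n. (F_hat ^^ n) \<mu>) delta0}"

end

theory Submission
  imports Defs
begin

instance bool :: second_countable_topology
proof
  have "open = generate_topology (UNIV :: bool set set)"
  proof
    fix x :: "bool set"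
    show "open x = generate_topology UNIV x"
      using discrete_topology_class.open_discrete[of x] generate_topology.Basis[of x UNIV] by auto
  qed
  then show "\<exists>B::bool set set. countable B \<and> open = generate_topology B"
    by (intro exI[of _ UNIV]) auto
qed

lemma coord_meas[measurable]: "(\<lambda>y::config. y k) \<in> measurable borel (count_space UNIV)"
proof -
  have "(\<lambda>y::config. y k) \<in> borel_measurable borel"
    by (intro borel_measurable_continuous_onI) simp
  then show ?thesis
    using measurable_cong_sets sets_borel_eq_count_space by blast
qed

lemma coord_pred[measurable]: "Measurable.pred borel (\<lambda>y::config. y k)"
  using coord_meas by (simp add: pred_def measurable_count_space_eq2)

lemma bool_borel_meas: "f \<in> measurable M (count_space UNIV) \<Longrightarrow> (f::_\<Rightarrow>bool) \<in> borel_measurable M"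
  using measurable_cong_sets sets_borel_eq_count_space by blast

lemma shift_meas[measurable]: "shift \<in> borel_measurable borel"
  unfolding shift_def by (rule measurable_coordinatewise_then_product) (rule bool_borel_meas, simp)

lemma Phi_b_meas[measurable]: "Phi_b \<in> borel_measurable borel"
  unfolding Phi_b_def by (rule measurable_coordinatewise_then_product) (rule bool_borel_meas, simp)

lemma Phi_A_meas[measurable]: "(\<lambda>(y, z). Phi_A y z) \<in> borel_measurable (borel \<Otimes>\<^sub>M borel)"
proof (rule measurable_coordinatewise_then_product)
  fix i
  have "(\<lambda>x. (case x of (y, z) \<Rightarrow> Phi_A y z) i) = (\<lambda>x. fst x i \<and> snd x i)"
    by (auto simp: Phi_A_def)
  moreover have "(\<lambda>x::config\<times>config. fst x i \<and> snd x i) \<in> measurable (borel \<Otimes>\<^sub>M borel) (count_space UNIV)"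
    by measurable
  ultimately show "(\<lambda>x. (case x of (y, z) \<Rightarrow> Phi_A y z) i) \<in> borel_measurable (borel \<Otimes>\<^sub>M borel)"
    using bool_borel_meas by metis
qed


lemma lawsD: assumes "\<mu> \<in> laws" shows "sets \<mu> = sets borel" "prob_space \<mu>" "space \<mu> = UNIV"
  using assms unfolding laws_def by (auto dest: sets_eq_imp_space_eq)

lemma meas_law: assumes "\<mu> \<in> laws" shows "measurable \<mu> N = measurable borel N"
  using lawsD[OF assms] by (intro measurable_cong_sets) auto

lemma meas_law2: assumes "\<mu> \<in> laws" shows "measurable (\<mu> \<Otimes>\<^sub>M \<mu>) N = measurable (borel \<Otimes>\<^sub>M borel) N"
  using lawsD[OF assms] by (intro measurable_cong_sets sets_pair_measure_cong) auto

lemma F_b_law: assumes "\<mu> \<in> laws" shows "F_b \<mu> \<in> laws"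
proof -
  interpret prob_space \<mu> using lawsD[OF assms] by auto
  show ?thesis unfolding laws_def F_b_def
    by (auto intro!: prob_space_distr simp: meas_law[OF assms])
qed

lemma F_A_law: assumes "\<mu> \<in> laws" shows "F_A \<mu> \<in> laws"
proof -
  interpret prob_space \<mu> using lawsD[OF assms] by auto
  interpret P: prob_space "\<mu> \<Otimes>\<^sub>M \<mu>" by (simp add: prob_space_axioms prob_space_pair)
  show ?thesis unfolding laws_def F_A_def
    by (auto intro!: P.prob_space_distr simp: meas_law2[OF assms])
qed

lemma F_law: "\<mu> \<in> laws \<Longrightarrow> F \<mu> \<in> laws" "\<mu> \<in> laws \<Longrightarrow> F_hat \<mu> \<in> laws"
  by (auto simp: F_def F_hat_def F_A_law F_b_law)

lemma Fn_law: "\<mu> \<in> laws \<Longrightarrow> (F ^^ n) \<mu> \<in> laws" "\<mu> \<in> laws \<Longrightarrow> (F_hat ^^ n) \<mu> \<in> laws"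
  by (induction n) (auto simp: F_law)

lemma F_b_stat: assumes "\<mu> \<in> stationary_laws" shows "F_b \<mu> \<in> stationary_laws"
proof -
  have L: "\<mu> \<in> laws" and S: "distr \<mu> borel shift = \<mu>" using assms by (auto simp: stationary_laws_def)
  have c: "shift \<circ> Phi_b = Phi_b \<circ> shift" by (auto simp: shift_def Phi_b_def)
  have "distr (F_b \<mu>) borel shift = distr \<mu> borel (shift \<circ> Phi_b)"
    unfolding F_b_def by (subst distr_distr) (auto simp: meas_law[OF L])
  also have "\<dots> = distr (distr \<mu> borel shift) borel Phi_b"
    unfolding c by (subst distr_distr) (auto simp: meas_law[OF L])
  also have "\<dots> = F_b \<mu>" by (simp add: S F_b_def)
  finally show ?thesis using F_b_law[OF L] by (simp add: stationary_laws_def)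
qed

lemma F_A_stat: assumes "\<mu> \<in> stationary_laws" shows "F_A \<mu> \<in> stationary_laws"
proof -
  have L: "\<mu> \<in> laws" and S: "distr \<mu> borel shift = \<mu>" using assms by (auto simp: stationary_laws_def)
  interpret prob_space \<mu> using lawsD[OF L] by auto
  have c: "shift \<circ> (\<lambda>(y, z). Phi_A y z) = (\<lambda>(y, z). Phi_A y z) \<circ> (\<lambda>(x, y). (shift x, shift y))"
    by (auto simp: shift_def Phi_A_def)
  have pm: "distr \<mu> borel shift \<Otimes>\<^sub>M distr \<mu> borel shift = distr (\<mu> \<Otimes>\<^sub>M \<mu>) (borel \<Otimes>\<^sub>M borel) (\<lambda>(x, y). (shift x, shift y))"
    by (rule pair_measure_distr) (auto simp: meas_law[OF L] S sigma_finite_measure_axioms)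
  have "distr (F_A \<mu>) borel shift = distr (\<mu> \<Otimes>\<^sub>M \<mu>) borel (shift \<circ> (\<lambda>(y, z). Phi_A y z))"
    unfolding F_A_def by (subst distr_distr) (auto simp: meas_law2[OF L])
  also have "\<dots> = distr (distr (\<mu> \<Otimes>\<^sub>M \<mu>) (borel \<Otimes>\<^sub>M borel) (\<lambda>(x, y). (shift x, shift y))) borel (\<lambda>(y, z). Phi_A y z)"
    unfolding c by (subst distr_distr) (auto simp: meas_law2[OF L])
  also have "\<dots> = F_A \<mu>" by (simp add: pm[symmetric] S F_A_def)
  finally show ?thesis using F_A_law[OF L] by (simp add: stationary_laws_def)
qed

lemma Fn_stat: "\<mu> \<in> stationary_laws \<Longrightarrow> (F ^^ n) \<mu> \<in> stationary_laws"
   "\<mu> \<in> stationary_laws \<Longrightarrow> (F_hat ^^ n) \<mu> \<in> stationary_laws"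
  by (induction n) (auto simp: F_def F_hat_def F_A_stat F_b_stat)


lemma cset[measurable]: "{y::config. y k} \<in> sets borel"
  using coord_pred[of k] by (simp add: pred_def)

definition cp :: "config measure \<Rightarrow> nat \<Rightarrow> real" where
  "cp \<nu> k = measure \<nu> {y. y k}"

definition nzs :: "config set" where "nzs = {y. \<exists>k. y k}"

lemma nzs_sets[measurable]: "nzs \<in> sets borel"
proof -
  have "Measurable.pred borel (\<lambda>y::config. \<exists>k. y k)" by measurable
  then show ?thesis by (simp add: pred_def nzs_def)
qed

definition nz :: "config measure \<Rightarrow> real" where "nz \<nu> = measure \<nu> nzs"

lemma rect: assumes "\<nu> \<in> laws" "A \<in> sets borel" "B \<in> sets borel"
  shows "measure (\<nu> \<Otimes>\<^sub>M \<nu>) (A \<times> B) = measure \<nu> A * measure \<nu> B"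
proof -
  interpret prob_space \<nu> using lawsD[OF assms(1)] by auto
  show ?thesis using assms lawsD[OF assms(1)]
    by (simp add: measure_def emeasure_pair_measure_Times enn2real_mult)
qed

lemma cp_stat: assumes "\<nu> \<in> stationary_laws" shows "cp \<nu> k = cp \<nu> 0"
proof (induction k)
  case (Suc k)
  have L: "\<nu> \<in> laws" and S: "distr \<nu> borel shift = \<nu>" using assms by (auto simp: stationary_laws_def)
  have "cp \<nu> k = measure (distr \<nu> borel shift) {y. y k}" by (simp add: S cp_def)
  also have "\<dots> = measure \<nu> (shift -` {y. y k} \<inter> space \<nu>)"
    by (rule measure_distr) (auto simp: meas_law[OF L])
  also have "\<dots> = cp \<nu> (Suc k)" by (simp add: cp_def shift_def lawsD[OF L])
  finally show ?case using Suc by simp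
qed simp

lemma cp_F_b: assumes L: "\<nu> \<in> laws" shows "cp (F_b \<nu>) k \<le> cp \<nu> k + cp \<nu> (Suc k)"
proof -
  have "cp (F_b \<nu>) k = measure \<nu> (Phi_b -` {y. y k} \<inter> space \<nu>)"
    unfolding cp_def F_b_def by (rule measure_distr) (auto simp: meas_law[OF L])
  also have "Phi_b -` {y. y k} \<inter> space \<nu> = {y. y k} \<union> {y. y (Suc k)}"
    by (auto simp: Phi_b_def lawsD[OF L])
  also have "measure \<nu> \<dots> \<le> cp \<nu> k + cp \<nu> (Suc k)"
    unfolding cp_def by (rule measure_Un_le) (auto simp: lawsD[OF L])
  finally show ?thesis .
qed

lemma cp_F_A: assumes L: "\<nu> \<in> laws" shows "cp (F_A \<nu>) k = (cp \<nu> k)\<^sup>2"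
proof -
  have "cp (F_A \<nu>) k = measure (\<nu> \<Otimes>\<^sub>M \<nu>) ((\<lambda>(y, z). Phi_A y z) -` {y. y k} \<inter> space (\<nu> \<Otimes>\<^sub>M \<nu>))"
    unfolding cp_def F_A_def by (rule measure_distr) (auto simp: meas_law2[OF L])
  also have "(\<lambda>(y, z). Phi_A y z) -` {y. y k} \<inter> space (\<nu> \<Otimes>\<^sub>M \<nu>) = {y. y k} \<times> {y. y k}"
    by (auto simp: Phi_A_def lawsD[OF L] space_pair_measure)
  also have "measure (\<nu> \<Otimes>\<^sub>M \<nu>) \<dots> = (cp \<nu> k)\<^sup>2"
    by (simp add: rect[OF L] cp_def power2_eq_square)
  finally show ?thesis .
qed

lemma cp_nz: assumes L: "\<nu> \<in> laws" shows "cp \<nu> k \<le> nz \<nu>"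
proof -
  interpret prob_space \<nu> using lawsD[OF L] by auto
  show ?thesis unfolding cp_def nz_def
    by (rule finite_measure_mono) (auto simp: nzs_def lawsD[OF L])
qed

lemma nz_F_b: assumes L: "\<nu> \<in> laws" shows "nz (F_b \<nu>) \<le> nz \<nu>"
proof -
  interpret prob_space \<nu> using lawsD[OF L] by auto
  have "nz (F_b \<nu>) = measure \<nu> (Phi_b -` nzs \<inter> space \<nu>)"
    unfolding nz_def F_b_def by (rule measure_distr) (auto simp: meas_law[OF L])
  also have "\<dots> \<le> nz \<nu>" unfolding nz_def
    by (rule finite_measure_mono) (auto simp: nzs_def Phi_b_def lawsD[OF L])
  finally show ?thesis .
qed

lemma nz_F_A: assumes L: "\<nu> \<in> laws" shows "nz (F_A \<nu>) \<le> (nz \<nu>)\<^sup>2"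
proof -
  interpret prob_space \<nu> using lawsD[OF L] by auto
  interpret P: prob_space "\<nu> \<Otimes>\<^sub>M \<nu>" by (simp add: prob_space_axioms prob_space_pair)
  have "nz (F_A \<nu>) = measure (\<nu> \<Otimes>\<^sub>M \<nu>) ((\<lambda>(y, z). Phi_A y z) -` nzs \<inter> space (\<nu> \<Otimes>\<^sub>M \<nu>))"
    unfolding nz_def F_A_def by (rule measure_distr) (auto simp: meas_law2[OF L])
  also have "\<dots> \<le> measure (\<nu> \<Otimes>\<^sub>M \<nu>) (nzs \<times> nzs)"
    by (rule P.finite_measure_mono) (auto simp: nzs_def Phi_A_def lawsD[OF L] sets_pair_measure_cong[OF lawsD(1)[OF L] lawsD(1)[OF L]])
  also have "\<dots> = (nz \<nu>)\<^sup>2"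
    by (simp add: rect[OF L] nz_def power2_eq_square)
  finally show ?thesis .
qed

definition zero :: config where "zero = (\<lambda>_. False)"

lemma bdd_cont_bound: assumes "bdd_cont f" obtains B where "B \<ge> 0" "\<And>y. \<bar>f y\<bar> \<le> B"
proof -
  from assms have "bounded (range f)" by (simp add: bdd_cont_def)
  then obtain B where "\<And>y. norm (f y) \<le> B" by (auto simp: bounded_iff)
  then show ?thesis using that[of B] by (metis abs_ge_zero real_norm_def order_trans)
qed

lemma bdd_cont_meas: "bdd_cont f \<Longrightarrow> f \<in> borel_measurable borel"
  by (simp add: bdd_cont_def borel_measurable_continuous_onI)

lemma bdd_cont_int: assumes "bdd_cont f" "\<nu> \<in> laws" shows "integrable \<nu> f"
proof -
  interpret prob_space \<nu> using lawsD[OF assms(2)] by auto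
  obtain B where "\<And>y. \<bar>f y\<bar> \<le> B" using bdd_cont_bound[OF assms(1)] by blast
  then show ?thesis
    by (intro integrable_const_bound[where B=B]) (auto simp: meas_law[OF assms(2)] bdd_cont_meas[OF assms(1)])
qed

lemma int_delta0: "bdd_cont f \<Longrightarrow> (\<integral>x. f x \<partial>delta0) = f zero"
  unfolding delta0_def zero_def by (rule integral_return) (auto simp: bdd_cont_meas)

lemma near_zero:
  assumes "bdd_cont f" "e > 0"
  shows "\<exists>m. \<forall>y. (\<forall>i<m. \<not> y i) \<longrightarrow> \<bar>f y - f zero\<bar> < e"
proof -
  have "open (f -` {f zero - e <..< f zero + e})"
    using assms by (intro open_vimage) (auto simp: bdd_cont_def)
  then have "openin (product_topology (\<lambda>_. euclidean) UNIV) (f -` {f zero - e <..< f zero + e})"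
    by (simp add: open_fun_def)
  from product_topology_open_contains_basis[OF this, of zero] assms
  obtain X where X: "zero \<in> (\<Pi>\<^sub>E i\<in>UNIV. X i)" "finite {i. X i \<noteq> UNIV}"
     "(\<Pi>\<^sub>E i\<in>UNIV. X i) \<subseteq> f -` {f zero - e <..< f zero + e}"
    by auto
  obtain m where m: "{i. X i \<noteq> UNIV} \<subseteq> {..<m}" using finite_nat_bounded[OF X(2)] by blast
  show ?thesis
  proof (intro exI allI impI)
    fix y :: config assume y: "\<forall>i<m. \<not> y i"
    have "y \<in> (\<Pi>\<^sub>E i\<in>UNIV. X i)"
    proof (simp add: PiE_def Pi_def, intro allI)
      fix i show "y i \<in> X i"
      proof (cases "X i = UNIV")
        case False
        then have "i < m" using m by auto
        then have "y i = zero i" using y by (simp add: zero_def)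
        then show ?thesis using X(1) by auto
      qed simp
    qed
    then have "f y \<in> {f zero - e <..< f zero + e}" using X(3) by blast
    then show "\<bar>f y - f zero\<bar> < e" by (simp add: abs_diff_less_iff)
  qed
qed

lemma weak_conv_crit:
  assumes L: "\<And>n. \<nu> n \<in> laws" and C: "\<And>n k. cp (\<nu> n) k \<le> c n" and lim: "c \<longlonglongrightarrow> 0"
  shows "weak_conv \<nu> delta0"
  unfolding weak_conv_def
proof (intro allI impI)
  fix f assume f: "bdd_cont f"
  obtain B where B: "B \<ge> 0" "\<And>y. \<bar>f y\<bar> \<le> B" using bdd_cont_bound[OF f] by blast
  show "(\<lambda>n. \<integral>x. f x \<partial>\<nu> n) \<longlonglongrightarrow> (\<integral>x. f x \<partial>delta0)"
    unfolding int_delta0[OF f] LIMSEQ_iff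
  proof (intro allI impI)
    fix e :: real assume e: "e > 0"
    obtain m where m: "\<And>y. (\<forall>i<m. \<not> y i) \<Longrightarrow> \<bar>f y - f zero\<bar> < e/4"
      using near_zero[OF f, of "e/4"] e by auto
    define d where "d = e / (4 * (B + 1) * (real m + 1))"
    have d: "d > 0" using e B by (simp add: d_def)
    obtain N where N: "\<And>n. n \<ge> N \<Longrightarrow> \<bar>c n\<bar> < d"
      using lim d unfolding LIMSEQ_iff by auto
    show "\<exists>no. \<forall>n\<ge>no. norm ((\<integral>x. f x \<partial>\<nu> n) - f zero) < e"
    proof (intro exI allI impI)
      fix n assume n: "n \<ge> N"
      interpret prob_space "\<nu> n" using lawsD[OF L] by auto
      define g where "g y = e/4 + 2 * B * (\<Sum>i<m. indicator {y. y i} y)" for y :: config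
      have pt: "\<bar>f y - f zero\<bar> \<le> g y" for y
      proof (cases "\<forall>i<m. \<not> y i")
        case True then show ?thesis using m[OF True] B
          by (auto simp: g_def intro!: add_increasing2 mult_nonneg_nonneg sum_nonneg)
      next
        case False
        then obtain i where i: "i < m" "y i" by auto
        have "indicator {y. y i} y \<le> (\<Sum>j<m. indicator {y. y j} y :: real)"
          by (rule member_le_sum) (use i in auto)
        then have "1 \<le> (\<Sum>i<m. indicator {y. y i} y :: real)" using i by simp
        then have "2 * B \<le> 2 * B * (\<Sum>i<m. indicator {y. y i} y)" using B
          by (metis mult.right_neutral mult_left_mono mult_nonneg_nonneg zero_le_numeral)
        moreover have "\<bar>f y - f zero\<bar> \<le> 2 * B" using B(2)[of y] B(2)[of zero] by linarith
        ultimately show ?thesis using e by (simp add: g_def)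
      qed
      have ii: "integrable (\<nu> n) (\<lambda>y. indicator {y. y i} y :: real)" for i
        using lawsD[OF L[of n]] by (intro integrable_real_indicator) (auto simp: less_top[symmetric])
      have isum: "integrable (\<nu> n) (\<lambda>y. (\<Sum>i<m. indicator {y. y i} y :: real))"
        by (rule Bochner_Integration.integrable_sum) (rule ii)
      have ig: "integrable (\<nu> n) g"
        unfolding g_def using isum by (intro Bochner_Integration.integrable_add integrable_const integrable_mult_right)
      have intg: "(\<integral>y. g y \<partial>\<nu> n) = e/4 + 2 * B * (\<Sum>i<m. cp (\<nu> n) i)"
        unfolding g_def
        apply (subst Bochner_Integration.integral_add)
          apply (rule integrable_const)
         apply (rule integrable_mult_right, rule isum)
        apply (subst integral_mult_right_zero)
        apply (subst Bochner_Integration.integral_sum, rule ii)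
        using lawsD[OF L[of n]] prob_space.prob_space[OF lawsD(2)[OF L[of n]]] by (simp add: cp_def)
      have c0: "0 \<le> c n" using C[of n 0] measure_nonneg[of "\<nu> n" "{y. y 0}"] unfolding cp_def by linarith
      have "(\<Sum>i<m. cp (\<nu> n) i) \<le> (\<Sum>i<m. c n)" by (intro sum_mono C)
      also have "\<dots> = real m * c n" by simp
      also have "\<dots> \<le> (real m + 1) * d" using N[OF n] c0 by (intro mult_mono) auto
      finally have s: "(\<Sum>i<m. cp (\<nu> n) i) \<le> (real m + 1) * d" .
      have "2 * B * (\<Sum>i<m. cp (\<nu> n) i) \<le> 2 * (B + 1) * ((real m + 1) * d)"
        using s B by (intro mult_mono) (auto intro!: sum_nonneg simp: cp_def)
      also have "\<dots> = e / 2"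
      proof -
        have K: "(B+1)*(real m+1) > 0" using B by auto
        have aux: "K > 0 \<Longrightarrow> 2*K*(e/(4*K)) = e/2" for K :: real by (simp add: field_simps)
        have dd: "d = e / (4 * ((B+1)*(real m+1)))" by (simp add: d_def mult.assoc)
        have "2 * (B + 1) * ((real m + 1) * d) = 2 * ((B+1)*(real m+1)) * d" by (simp only: mult.assoc)
        also have "\<dots> = e / 2" unfolding dd by (rule aux[OF K])
        finally show ?thesis .
      qed
      finally have intg2: "(\<integral>y. g y \<partial>\<nu> n) < e" using intg e by simp
      have "(\<integral>x. f x \<partial>\<nu> n) - f zero = (\<integral>x. f x - f zero \<partial>\<nu> n)"
        using bdd_cont_int[OF f L] prob_space by simp
      also have "\<bar>\<dots>\<bar> \<le> (\<integral>x. \<bar>f x - f zero\<bar> \<partial>\<nu> n)" by (rule integral_abs_bound)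
      also have "\<dots> \<le> (\<integral>y. g y \<partial>\<nu> n)"
        using pt ig bdd_cont_int[OF f L] by (intro integral_mono) auto
      finally show "norm ((\<integral>x. f x \<partial>\<nu> n) - f zero) < e" using intg2 by simp
    qed
  qed
qed

definition pre :: "config \<Rightarrow> nat \<Rightarrow> bool list" where "pre y n = map y [0..<n]"
definition cyl :: "bool list \<Rightarrow> config set" where "cyl b = {y. pre y (length b) = b}"

lemma pre_eq: "pre y (length b) = b \<longleftrightarrow> (\<forall>i<length b. y i = b ! i)"
  unfolding pre_def list_eq_iff_nth_eq by simp

lemma cyl_alt: "cyl b = {y. \<forall>i<length b. y i = b ! i}"
  unfolding cyl_def pre_eq ..

lemma cyl_sets[measurable]: "cyl b \<in> sets borel"
proof -
  have p: "{y::config. y i = c} \<in> sets borel" for i c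
  proof (cases c)
    case True then show ?thesis using cset[of i] by simp
  next
    case False
    have "{y::config. y i = c} = space borel - {y. y i}" using False by auto
    then show ?thesis using cset[of i] by (metis sets.compl_sets)
  qed
  show ?thesis
  proof (cases "b = []")
    case True
    then have "cyl b = space borel" by (simp add: cyl_alt)
    then show ?thesis by simp
  next
    case False
    have "cyl b = (\<Inter>i\<in>{..<length b}. {y. y i = b ! i})" by (auto simp: cyl_alt)
    also have "\<dots> \<in> sets borel" using p False by (intro sets.finite_INT) auto
    finally show ?thesis .
  qed
qed

lemma cyl_True: "cyl [True] = {y. y 0}"
  by (auto simp: cyl_alt)

abbreviation wc :: "(config measure \<Rightarrow> real) \<Rightarrow> bool" where
  "wc \<Lambda> \<equiv> continuous_map weak_topology euclideanreal \<Lambda>"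

lemma topspace_weak: "topspace weak_topology = laws"
proof -
  have "bdd_cont (\<lambda>_. 0)" by (simp add: bdd_cont_def)
  then have "laws \<in> {{\<mu> \<in> laws. (\<integral>x. f x \<partial>\<mu>) \<in> U} | f U. bdd_cont f \<and> open U}"
    by (intro CollectI exI[of _ "\<lambda>_. 0"] exI[of _ UNIV]) auto
  moreover have "\<Union>{{\<mu> \<in> laws. (\<integral>x. f x \<partial>\<mu>) \<in> U} | f U. bdd_cont f \<and> open U} \<subseteq> laws"
    by blast
  ultimately show ?thesis unfolding weak_topology_def topology_generated_by_topspace
    by (intro equalityI) (assumption, rule Union_upper)
qed

lemma wc_integral: assumes "bdd_cont f" shows "wc (\<lambda>\<mu>. \<integral>x. f x \<partial>\<mu>)"
  unfolding continuous_map_def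
proof (intro conjI allI impI)
  fix U :: "real set" assume "openin euclideanreal U"
  then have "open U" by simp
  then have "{\<mu> \<in> laws. (\<integral>x. f x \<partial>\<mu>) \<in> U} \<in> {{\<mu> \<in> laws. (\<integral>x. f x \<partial>\<mu>) \<in> U} | f U. bdd_cont f \<and> open U}"
    using assms by blast
  then show "openin weak_topology {x \<in> topspace weak_topology. (\<integral>y. f y \<partial>x) \<in> U}"
    unfolding topspace_weak unfolding weak_topology_def by (rule topology_generated_by_Basis)
qed auto

lemma ind_cyl: "indicator (cyl b) y = (\<Prod>i<length b. if y i = b ! i then 1 else 0 :: real)"
proof (cases "y \<in> cyl b")
  case True
  then show ?thesis by (simp add: cyl_alt)
next
  case False
  then obtain i where i: "i < length b" "y i \<noteq> b ! i" by (auto simp: cyl_alt)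
  have "(\<Prod>i<length b. if y i = b ! i then 1 else 0 :: real) = 0"
    by (rule prod_zero) (use i in auto)
  then show ?thesis using False by simp
qed

lemma bdd_cont_cyl: "bdd_cont (indicator (cyl b) :: config \<Rightarrow> real)"
proof -
  have c: "continuous_on UNIV (\<lambda>y::config. if y i = b ! i then 1 else 0 :: real)" for i
  proof -
    have "continuous_on UNIV (\<lambda>v::bool. if v = b ! i then 1 else 0 :: real)"
      by (rule Topological_Spaces.continuous_on_discrete)
    then show ?thesis
      by (rule continuous_on_compose2[where f="\<lambda>y::config. y i"]; simp)
  qed
  have "continuous_on UNIV (indicator (cyl b) :: config \<Rightarrow> real)"
    unfolding ind_cyl[abs_def] by (intro continuous_on_prod c)
  moreover have "bounded (range (indicator (cyl b) :: config \<Rightarrow> real))"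
    by (rule bounded_subset[of "{0,1}"]) (auto simp: indicator_def)
  ultimately show ?thesis by (simp add: bdd_cont_def)
qed

lemma wc_cyl: "wc (\<lambda>\<mu>. measure \<mu> (cyl b))"
proof (rule continuous_map_eq[OF wc_integral[OF bdd_cont_cyl[of b]]])
  fix \<mu> assume "\<mu> \<in> topspace weak_topology"
  then have "\<mu> \<in> laws" by (simp add: topspace_weak)
  then show "(\<integral>x. indicator (cyl b) x \<partial>\<mu>) = measure \<mu> (cyl b)"
    by (simp add: lawsD)
qed

lemma length_pre[simp]: "length (pre y n) = n" by (simp add: pre_def)
lemma nth_pre[simp]: "i < n \<Longrightarrow> pre y n ! i = y i" by (simp add: pre_def)

lemma finite_len: "finite {b :: bool list. length b = n \<and> P b}"
proof -
  have "finite {xs :: bool list. set xs \<subseteq> UNIV \<and> length xs = n}"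
    by (rule finite_lists_length_eq) simp
  then show ?thesis by (rule finite_subset[rotated]) auto
qed

lemma in_cyl_pre: "length b = n \<Longrightarrow> y \<in> cyl b \<longleftrightarrow> pre y n = b"
  by (simp add: cyl_def)

lemma meas_prefix: assumes L: "\<nu> \<in> laws"
  shows "measure \<nu> {y. P (pre y n)} = (\<Sum>b\<in>{b. length b = n \<and> P b}. measure \<nu> (cyl b))"
proof -
  interpret prob_space \<nu> using lawsD[OF L] by auto
  let ?T = "{b. length b = n \<and> P b}"
  have eq: "{y. P (pre y n)} = (\<Union>b\<in>?T. cyl b)"
  proof (intro equalityI subsetI)
    fix y assume "y \<in> {y. P (pre y n)}"
    then have "pre y n \<in> ?T" "y \<in> cyl (pre y n)" by (auto simp: in_cyl_pre)
    then show "y \<in> (\<Union>b\<in>?T. cyl b)" by blast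
  next
    fix y assume "y \<in> (\<Union>b\<in>?T. cyl b)"
    then obtain b where "b \<in> ?T" "y \<in> cyl b" by blast
    then show "y \<in> {y. P (pre y n)}" by (auto simp: in_cyl_pre)
  qed
  have disj: "disjoint_family_on cyl ?T"
    unfolding disjoint_family_on_def by (auto simp: in_cyl_pre)
  show ?thesis unfolding eq
    by (rule finite_measure_finite_Union) (auto simp: finite_len disj lawsD[OF L])
qed

lemma Fb_cyl: assumes L: "\<nu> \<in> laws"
  shows "measure (F_b \<nu>) (cyl a) =
    (\<Sum>b\<in>{b. length b = Suc (length a) \<and> (\<forall>i<length a. (b ! i \<or> b ! Suc i) = a ! i)}. measure \<nu> (cyl b))"
proof -
  have "measure (F_b \<nu>) (cyl a) = measure \<nu> (Phi_b -` cyl a \<inter> space \<nu>)"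
    unfolding F_b_def by (rule measure_distr) (auto simp: meas_law[OF L])
  also have "Phi_b -` cyl a \<inter> space \<nu> =
     {y. (\<lambda>b. \<forall>i<length a. (b ! i \<or> b ! Suc i) = a ! i) (pre y (Suc (length a)))}"
  proof -
    have "Phi_b y \<in> cyl a \<longleftrightarrow> (\<lambda>b. \<forall>i<length a. (b ! i \<or> b ! Suc i) = a ! i) (pre y (Suc (length a)))" for y
      unfolding cyl_alt Phi_b_def by simp
    then show ?thesis using lawsD(3)[OF L] by blast
  qed
  also have "measure \<nu> \<dots> = (\<Sum>b\<in>{b. length b = Suc (length a) \<and> (\<forall>i<length a. (b ! i \<or> b ! Suc i) = a ! i)}. measure \<nu> (cyl b))"
    by (rule meas_prefix[OF L])
  finally show ?thesis .
qed

lemma FA_cyl: assumes L: "\<nu> \<in> laws"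
  shows "measure (F_A \<nu>) (cyl a) =
    (\<Sum>p\<in>{p. length (fst p) = length a \<and> length (snd p) = length a \<and> (\<forall>i<length a. (fst p ! i \<and> snd p ! i) = a ! i)}.
       measure \<nu> (cyl (fst p)) * measure \<nu> (cyl (snd p)))"
proof -
  interpret prob_space \<nu> using lawsD[OF L] by auto
  interpret P: prob_space "\<nu> \<Otimes>\<^sub>M \<nu>" by (simp add: prob_space_axioms prob_space_pair)
  let ?n = "length a"
  let ?T = "{p. length (fst p) = ?n \<and> length (snd p) = ?n \<and> (\<forall>i<?n. (fst p ! i \<and> snd p ! i) = a ! i)}"
  have fin: "finite ?T"
  proof -
    have "?T \<subseteq> {b. length b = ?n \<and> True} \<times> {b. length b = ?n \<and> True}" by auto
    then show ?thesis by (rule finite_subset[OF _ finite_cartesian_product[OF finite_len finite_len]])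
  qed
  have "measure (F_A \<nu>) (cyl a) = measure (\<nu> \<Otimes>\<^sub>M \<nu>) ((\<lambda>(y, z). Phi_A y z) -` cyl a \<inter> space (\<nu> \<Otimes>\<^sub>M \<nu>))"
    unfolding F_A_def by (rule measure_distr) (auto simp: meas_law2[OF L])
  also have "(\<lambda>(y, z). Phi_A y z) -` cyl a \<inter> space (\<nu> \<Otimes>\<^sub>M \<nu>) = (\<Union>p\<in>?T. cyl (fst p) \<times> cyl (snd p))"
  proof (intro equalityI subsetI)
    fix x assume x: "x \<in> (\<lambda>(y, z). Phi_A y z) -` cyl a \<inter> space (\<nu> \<Otimes>\<^sub>M \<nu>)"
    obtain y z where xyz: "x = (y, z)" by (cases x)
    have "\<forall>i<?n. (y i \<and> z i) = a ! i" using x unfolding xyz cyl_alt Phi_A_def by simp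
    then have "(pre y ?n, pre z ?n) \<in> ?T" by simp
    moreover have "x \<in> cyl (fst (pre y ?n, pre z ?n)) \<times> cyl (snd (pre y ?n, pre z ?n))"
      unfolding xyz fst_conv snd_conv cyl_def length_pre by simp
    ultimately show "x \<in> (\<Union>p\<in>?T. cyl (fst p) \<times> cyl (snd p))" by (rule UN_I)
  next
    fix x assume "x \<in> (\<Union>p\<in>?T. cyl (fst p) \<times> cyl (snd p))"
    then obtain p where p: "p \<in> ?T" "x \<in> cyl (fst p) \<times> cyl (snd p)" by blast
    obtain y z where xyz: "x = (y, z)" by (cases x)
    obtain b c where pbc: "p = (b, c)" by (cases p)
    have yb: "\<forall>i<?n. y i = b ! i" and zc: "\<forall>i<?n. z i = c ! i" and bc: "\<forall>i<?n. (b ! i \<and> c ! i) = a ! i"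
      using p unfolding xyz pbc cyl_alt by auto
    have "\<forall>i<?n. (y i \<and> z i) = a ! i" using yb zc bc by simp
    then have "Phi_A y z \<in> cyl a" unfolding cyl_alt Phi_A_def by simp
    then show "x \<in> (\<lambda>(y, z). Phi_A y z) -` cyl a \<inter> space (\<nu> \<Otimes>\<^sub>M \<nu>)"
      unfolding xyz space_pair_measure lawsD(3)[OF L] by simp
  qed
  also have "measure (\<nu> \<Otimes>\<^sub>M \<nu>) \<dots> = (\<Sum>p\<in>?T. measure (\<nu> \<Otimes>\<^sub>M \<nu>) (cyl (fst p) \<times> cyl (snd p)))"
  proof (rule P.finite_measure_finite_Union)
    show "finite ?T" by (rule fin)
    show "(\<lambda>p. cyl (fst p) \<times> cyl (snd p)) ` ?T \<subseteq> P.events"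
    proof (rule image_subsetI)
      fix p :: "bool list \<times> bool list"
      have "cyl (fst p) \<in> sets \<nu>" "cyl (snd p) \<in> sets \<nu>" using lawsD(1)[OF L] by simp_all
      then show "cyl (fst p) \<times> cyl (snd p) \<in> P.events" by (rule pair_measureI)
    qed
    show "disjoint_family_on (\<lambda>p. cyl (fst p) \<times> cyl (snd p)) ?T"
      unfolding disjoint_family_on_def
    proof (intro ballI impI)
      fix p q assume pq: "p \<in> ?T" "q \<in> ?T" "p \<noteq> q"
      show "(cyl (fst p) \<times> cyl (snd p)) \<inter> (cyl (fst q) \<times> cyl (snd q)) = {}"
      proof (rule ccontr)
        assume "(cyl (fst p) \<times> cyl (snd p)) \<inter> (cyl (fst q) \<times> cyl (snd q)) \<noteq> {}"
        then obtain y z where "(y, z) \<in> cyl (fst p) \<times> cyl (snd p)" "(y, z) \<in> cyl (fst q) \<times> cyl (snd q)" by auto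
        then have "pre y ?n = fst p" "pre y ?n = fst q" "pre z ?n = snd p" "pre z ?n = snd q"
          using pq by (auto simp: in_cyl_pre)
        then show False using pq(3) by (simp add: prod_eq_iff)
      qed
    qed
  qed
  also have "\<dots> = (\<Sum>p\<in>?T. measure \<nu> (cyl (fst p)) * measure \<nu> (cyl (snd p)))"
    by (rule sum.cong[OF refl]) (rule rect[OF L]; simp)
  finally show ?thesis .
qed

lemma wc_Fb_gen: assumes G: "\<And>\<mu>. \<mu> \<in> laws \<Longrightarrow> G \<mu> \<in> laws" and C: "\<And>b. wc (\<lambda>\<mu>. measure (G \<mu>) (cyl b))"
  shows "wc (\<lambda>\<mu>. measure (F_b (G \<mu>)) (cyl a))"
proof (rule continuous_map_eq)
  show "wc (\<lambda>\<mu>. \<Sum>b\<in>{b. length b = Suc (length a) \<and> (\<forall>i<length a. (b ! i \<or> b ! Suc i) = a ! i)}. measure (G \<mu>) (cyl b))"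
    by (intro continuous_map_sum finite_len C)
  fix \<mu> assume "\<mu> \<in> topspace weak_topology"
  then show "(\<Sum>b\<in>{b. length b = Suc (length a) \<and> (\<forall>i<length a. (b ! i \<or> b ! Suc i) = a ! i)}. measure (G \<mu>) (cyl b)) =
     measure (F_b (G \<mu>)) (cyl a)"
    using Fb_cyl[OF G] by (simp add: topspace_weak)
qed

lemma wc_FA_gen: assumes G: "\<And>\<mu>. \<mu> \<in> laws \<Longrightarrow> G \<mu> \<in> laws" and C: "\<And>b. wc (\<lambda>\<mu>. measure (G \<mu>) (cyl b))"
  shows "wc (\<lambda>\<mu>. measure (F_A (G \<mu>)) (cyl a))"
proof -
  let ?n = "length a"
  let ?T = "{p. length (fst p) = ?n \<and> length (snd p) = ?n \<and> (\<forall>i<?n. (fst p ! i \<and> snd p ! i) = a ! i)}"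
  have fin: "finite ?T"
  proof -
    have "?T \<subseteq> {b. length b = ?n \<and> True} \<times> {b. length b = ?n \<and> True}" by auto
    then show ?thesis by (rule finite_subset[OF _ finite_cartesian_product[OF finite_len finite_len]])
  qed
  show ?thesis
  proof (rule continuous_map_eq)
    show "wc (\<lambda>\<mu>. \<Sum>p\<in>?T. measure (G \<mu>) (cyl (fst p)) * measure (G \<mu>) (cyl (snd p)))"
      by (intro continuous_map_sum fin continuous_map_real_mult C)
    fix \<mu> assume "\<mu> \<in> topspace weak_topology"
    then show "(\<Sum>p\<in>?T. measure (G \<mu>) (cyl (fst p)) * measure (G \<mu>) (cyl (snd p))) = measure (F_A (G \<mu>)) (cyl a)"
      using FA_cyl[OF G] by (simp add: topspace_weak)
  qed
qed

lemma wc_Fn: "wc (\<lambda>\<mu>. measure ((F ^^ n) \<mu>) (cyl a))"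
proof (induction n arbitrary: a)
  case 0 then show ?case using wc_cyl by simp
next
  case (Suc n)
  have "wc (\<lambda>\<mu>. measure (F_A (F_b ((F ^^ n) \<mu>))) (cyl a))"
    by (rule wc_FA_gen) (auto intro: wc_Fb_gen Suc Fn_law F_b_law)
  moreover have "(F ^^ Suc n) \<mu> = F_A (F_b ((F ^^ n) \<mu>))" for \<mu> by (simp add: F_def)
  ultimately show ?case by simp
qed

lemma wc_Fhatn: "wc (\<lambda>\<mu>. measure ((F_hat ^^ n) \<mu>) (cyl a))"
proof (induction n arbitrary: a)
  case 0 then show ?case using wc_cyl by simp
next
  case (Suc n)
  have "wc (\<lambda>\<mu>. measure (F_b (F_A ((F_hat ^^ n) \<mu>))) (cyl a))"
    by (rule wc_Fb_gen) (auto intro: wc_FA_gen Suc Fn_law F_A_law)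
  moreover have "(F_hat ^^ Suc n) \<mu> = F_b (F_A ((F_hat ^^ n) \<mu>))" for \<mu> by (simp add: F_hat_def)
  ultimately show ?case by simp
qed

lemma cp_nonneg: "0 \<le> cp \<nu> k" by (simp add: cp_def)

lemma cp_le1: "\<nu> \<in> laws \<Longrightarrow> cp \<nu> k \<le> 1"
  unfolding cp_def using lawsD(2) prob_space.prob_le_1 by blast

lemma F_step: assumes L: "\<rho> \<in> laws" and S: "\<And>k. cp \<rho> k \<le> s"
  shows "cp (F \<rho>) j \<le> 4 * s\<^sup>2"
proof -
  have "cp (F \<rho>) j = (cp (F_b \<rho>) j)\<^sup>2" by (simp add: F_def cp_F_A F_b_law[OF L])
  also have "\<dots> \<le> (2 * s)\<^sup>2"
  proof (rule power_mono)
    show "cp (F_b \<rho>) j \<le> 2 * s" using cp_F_b[OF L, of j] S[of j] S[of "Suc j"] by linarith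
  qed (rule cp_nonneg)
  finally show ?thesis by (simp add: power2_eq_square)
qed

lemma Fhat_step: assumes L: "\<rho> \<in> laws" and S: "\<And>k. cp \<rho> k \<le> s"
  shows "cp (F_hat \<rho>) j \<le> 4 * s\<^sup>2"
proof -
  have "cp (F_hat \<rho>) j \<le> cp (F_A \<rho>) j + cp (F_A \<rho>) (Suc j)"
    using cp_F_b[OF F_A_law[OF L]] by (simp add: F_hat_def)
  also have "\<dots> = (cp \<rho> j)\<^sup>2 + (cp \<rho> (Suc j))\<^sup>2" by (simp add: cp_F_A[OF L])
  also have "\<dots> \<le> s\<^sup>2 + s\<^sup>2" using S cp_nonneg by (intro add_mono power_mono) auto
  also have "\<dots> \<le> 4 * s\<^sup>2" by simp
  finally show ?thesis .
qed

lemma iter_decay: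
  assumes GL: "\<And>\<rho>. \<rho> \<in> laws \<Longrightarrow> G \<rho> \<in> laws"
    and GS: "\<And>\<rho> s j. \<rho> \<in> laws \<Longrightarrow> (\<And>k. cp \<rho> k \<le> s) \<Longrightarrow> cp (G \<rho>) j \<le> 4 * s\<^sup>2"
    and L: "\<nu> \<in> laws" and R: "\<And>k. cp \<nu> k \<le> r" and r: "0 \<le> r" "r \<le> 1/4"
  shows "(G ^^ m) \<nu> \<in> laws \<and> (\<forall>j. cp ((G ^^ m) \<nu>) j \<le> r * (4 * r) ^ m)"
proof (induction m)
  case 0 then show ?case using L R by simp
next
  case (Suc m)
  let ?s = "r * (4 * r) ^ m"
  have q: "0 \<le> 4 * r" "4 * r \<le> 1" using r by auto
  have "cp ((G ^^ Suc m) \<nu>) j \<le> r * (4 * r) ^ Suc m" for j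
  proof -
    have "cp ((G ^^ Suc m) \<nu>) j \<le> 4 * ?s\<^sup>2" using Suc GS by simp
    also have "4 * ?s\<^sup>2 = r * (4 * r) * ((4 * r) ^ m * (4 * r) ^ m)" by (simp add: power2_eq_square algebra_simps)
    also have "\<dots> \<le> r * (4 * r) * ((4 * r) ^ m * 1)"
    proof -
      have "(4 * r) ^ m \<le> 1" using q by (rule power_le_one)
      then show ?thesis using q r by (intro mult_left_mono mult_nonneg_nonneg) auto
    qed
    also have "\<dots> = r * (4 * r) ^ Suc m" by simp
    finally show ?thesis .
  qed
  then show ?case using Suc GL by simp
qed

lemma conv_of_small:
  assumes GL: "\<And>\<rho>. \<rho> \<in> laws \<Longrightarrow> G \<rho> \<in> laws"
    and GS: "\<And>\<rho> s j. \<rho> \<in> laws \<Longrightarrow> (\<And>k. cp \<rho> k \<le> s) \<Longrightarrow> cp (G \<rho>) j \<le> 4 * s\<^sup>2"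
    and L: "\<mu> \<in> laws" and St: "(G ^^ n) \<mu> \<in> stationary_laws" and small: "cp ((G ^^ n) \<mu>) 0 < 1/4"
  shows "weak_conv (\<lambda>m. (G ^^ m) \<mu>) delta0"
proof -
  have GnL: "(G ^^ m) \<mu> \<in> laws" for m by (induction m) (auto simp: L GL)
  define \<nu> where "\<nu> = (G ^^ n) \<mu>"
  define r where "r = cp \<nu> 0"
  have r: "0 \<le> r" "r \<le> 1/4" "r < 1/4" using small cp_nonneg by (auto simp: r_def \<nu>_def)
  have R: "cp \<nu> k \<le> r" for k using cp_stat[OF St, of k] unfolding r_def \<nu>_def by simp
  have Lnu: "\<nu> \<in> laws" using St by (simp add: \<nu>_def stationary_laws_def)
  define c where "c m = (if m < n then 1 else r * (4 * r) ^ (m - n))" for m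
  show ?thesis
  proof (rule weak_conv_crit[where c = c])
    show "(G ^^ m) \<mu> \<in> laws" for m by (rule GnL)
    show "cp ((G ^^ m) \<mu>) k \<le> c m" for m k
    proof (cases "m < n")
      case True then show ?thesis using cp_le1[OF GnL] by (simp add: c_def)
    next
      case False
      then obtain d where d: "m = d + n" by (metis add.commute le_Suc_ex not_less)
      have "(G ^^ (d + n)) \<mu> = (G ^^ d) \<nu>"
        unfolding funpow_add \<nu>_def by simp
      then have "(G ^^ m) \<mu> = (G ^^ (m - n)) \<nu>" using d by simp
      then show ?thesis using False iter_decay[OF GL GS Lnu R r(1,2), where m="m - n"] by (simp add: c_def)
    qed
    have "(\<lambda>m. c (m + n)) \<longlonglongrightarrow> 0"
    proof -
      have "(\<lambda>m. r * (4 * r) ^ m) \<longlonglongrightarrow> r * 0"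
        using r by (intro tendsto_mult tendsto_const LIMSEQ_power_zero) auto
      then show ?thesis by (simp add: c_def)
    qed
    then show "c \<longlonglongrightarrow> 0" by (rule LIMSEQ_offset)
  qed
qed

lemma small_of_conv:
  assumes L: "\<And>m. \<nu> m \<in> laws" and W: "weak_conv \<nu> delta0"
  shows "\<exists>n. cp (\<nu> n) 0 < 1/4"
proof -
  have "(\<lambda>m. \<integral>x. (indicator (cyl [True]) x :: real) \<partial>\<nu> m) \<longlonglongrightarrow> (\<integral>x. (indicator (cyl [True]) x :: real) \<partial>delta0)"
    using W[unfolded weak_conv_def, rule_format, OF bdd_cont_cyl[of "[True]"]] .
  moreover have "(\<integral>x. (indicator (cyl [True]) x :: real) \<partial>delta0) = (0::real)"
    using int_delta0[OF bdd_cont_cyl[of "[True]"]] by (simp add: cyl_True zero_def)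
  moreover have "(\<integral>x. (indicator (cyl [True]) x :: real) \<partial>\<nu> m) = cp (\<nu> m) 0" for m
    using lawsD[OF L[of m]] by (simp add: cyl_True cp_def)
  ultimately have "(\<lambda>m. cp (\<nu> m) 0) \<longlonglongrightarrow> 0" by simp
  then have "eventually (\<lambda>m. cp (\<nu> m) 0 \<in> {..<1/4}) sequentially"
    by (rule topological_tendstoD) auto
  then obtain N where "\<And>m. m \<ge> N \<Longrightarrow> cp (\<nu> m) 0 \<in> {..<1/4}"
    unfolding eventually_sequentially by blast
  then have "cp (\<nu> N) 0 < 1/4" by simp
  then show ?thesis ..
qed

lemma D0_char: assumes "\<mu> \<in> stationary_laws"
  shows "\<mu> \<in> D0 \<longleftrightarrow> (\<exists>n. cp ((F ^^ n) \<mu>) 0 < 1/4)"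
proof
  have L: "\<mu> \<in> laws" using assms by (simp add: stationary_laws_def)
  show "\<mu> \<in> D0 \<Longrightarrow> \<exists>n. cp ((F ^^ n) \<mu>) 0 < 1/4"
    unfolding D0_def by (intro small_of_conv) (auto intro: Fn_law L)
  assume "\<exists>n. cp ((F ^^ n) \<mu>) 0 < 1/4"
  then obtain n where n: "cp ((F ^^ n) \<mu>) 0 < 1/4" by blast
  have "weak_conv (\<lambda>m. (F ^^ m) \<mu>) delta0"
    by (rule conv_of_small[OF _ _ L Fn_stat(1)[OF assms] n]) (auto intro: F_law F_step)
  then show "\<mu> \<in> D0" using assms by (simp add: D0_def)
qed

lemma D0_hat_char: assumes "\<mu> \<in> stationary_laws"
  shows "\<mu> \<in> D0_hat \<longleftrightarrow> (\<exists>n. cp ((F_hat ^^ n) \<mu>) 0 < 1/4)"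
proof
  have L: "\<mu> \<in> laws" using assms by (simp add: stationary_laws_def)
  show "\<mu> \<in> D0_hat \<Longrightarrow> \<exists>n. cp ((F_hat ^^ n) \<mu>) 0 < 1/4"
    unfolding D0_hat_def by (intro small_of_conv) (auto intro: Fn_law L)
  assume "\<exists>n. cp ((F_hat ^^ n) \<mu>) 0 < 1/4"
  then obtain n where n: "cp ((F_hat ^^ n) \<mu>) 0 < 1/4" by blast
  have "weak_conv (\<lambda>m. (F_hat ^^ m) \<mu>) delta0"
    by (rule conv_of_small[OF _ _ L Fn_stat(2)[OF assms] n]) (auto intro: F_law Fhat_step)
  then show "\<mu> \<in> D0_hat" using assms by (simp add: D0_hat_def)
qed

lemma stat_sub: "stationary_laws \<subseteq> topspace weak_topology"
  by (auto simp: topspace_weak stationary_laws_def)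

lemma D0_open: "openin (subtopology weak_topology stationary_laws) D0"
  unfolding openin_subtopology
proof (intro exI conjI)
  let ?T = "\<Union>n. {\<mu> \<in> topspace weak_topology. measure ((F ^^ n) \<mu>) (cyl [True]) \<in> {..<1/4}}"
  have o: "openin weak_topology {\<mu> \<in> topspace weak_topology. measure ((F ^^ n) \<mu>) (cyl [True]) \<in> {..<1/4}}" for n
    by (rule openin_continuous_map_preimage[OF wc_Fn]) simp
  show "openin weak_topology ?T"
    using o by (intro openin_Union) blast
  show "D0 = ?T \<inter> stationary_laws"
    using D0_char stat_sub by (auto simp: cyl_True cp_def D0_def)
qed

lemma D0_hat_open: "openin (subtopology weak_topology stationary_laws) D0_hat"
  unfolding openin_subtopology
proof (intro exI conjI)
  let ?T = "\<Union>n. {\<mu> \<in> topspace weak_topology. measure ((F_hat ^^ n) \<mu>) (cyl [True]) \<in> {..<1/4}}"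
  have o: "openin weak_topology {\<mu> \<in> topspace weak_topology. measure ((F_hat ^^ n) \<mu>) (cyl [True]) \<in> {..<1/4}}" for n
    by (rule openin_continuous_map_preimage[OF wc_Fhatn]) simp
  show "openin weak_topology ?T"
    using o by (intro openin_Union) blast
  show "D0_hat = ?T \<inter> stationary_laws"
    using D0_hat_char stat_sub by (auto simp: cyl_True cp_def D0_hat_def)
qed

abbreviation Bm :: "real \<Rightarrow> bool measure" where "Bm p \<equiv> measure_pmf (bernoulli_pmf p)"

definition mixmap :: "bool \<times> config \<Rightarrow> config" where
  "mixmap = (\<lambda>(b, y). if b then y else zero)"

definition mix :: "real \<Rightarrow> config measure \<Rightarrow> config measure" where
  "mix p \<mu> = distr (Bm p \<Otimes>\<^sub>M \<mu>) borel mixmap"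

lemma mixmap_meas: "mixmap \<in> measurable (Bm p \<Otimes>\<^sub>M borel) borel"
proof -
  have "mixmap \<in> measurable (count_space UNIV \<Otimes>\<^sub>M borel) borel"
  proof (rule measurable_pair_measure_countable1)
    fix b :: bool
    show "(\<lambda>y. mixmap (b, y)) \<in> borel_measurable borel"
      by (cases b) (simp_all add: mixmap_def)
  qed simp
  moreover have "sets (Bm p \<Otimes>\<^sub>M borel) = sets (count_space UNIV \<Otimes>\<^sub>M (borel :: config measure))"
    by (intro sets_pair_measure_cong) auto
  ultimately show ?thesis using measurable_cong_sets by blast
qed

lemma mixmap_meas': "\<mu> \<in> laws \<Longrightarrow> mixmap \<in> measurable (Bm p \<Otimes>\<^sub>M \<mu>) borel"
proof -
  assume L: "\<mu> \<in> laws"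
  have "sets (Bm p \<Otimes>\<^sub>M \<mu>) = sets (Bm p \<Otimes>\<^sub>M (borel :: config measure))"
    using lawsD(1)[OF L] by (intro sets_pair_measure_cong) auto
  then show ?thesis using mixmap_meas measurable_cong_sets by blast
qed

lemma mix_law: assumes L: "\<mu> \<in> laws" shows "mix p \<mu> \<in> laws"
proof -
  interpret M: prob_space \<mu> using lawsD[OF L] by auto
  interpret P: prob_space "Bm p \<Otimes>\<^sub>M \<mu>"
    by (intro prob_space_pair prob_space_measure_pmf M.prob_space_axioms)
  show ?thesis unfolding laws_def mix_def
    by (auto intro!: P.prob_space_distr mixmap_meas'[OF L])
qed

lemma mix_int: assumes L: "\<mu> \<in> laws" and f: "bdd_cont f" and p: "0 \<le> p" "p \<le> 1"
  shows "(\<integral>x. f x \<partial>mix p \<mu>) = (\<integral>x. f x \<partial>\<mu>) * p + f zero * (1 - p)"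
proof -
  interpret M: prob_space \<mu> using lawsD[OF L] by auto
  interpret P: prob_space "Bm p \<Otimes>\<^sub>M \<mu>"
    by (intro prob_space_pair prob_space_measure_pmf M.prob_space_axioms)
  interpret PP: pair_prob_space "Bm p" \<mu>
    by (simp add: pair_prob_space_def pair_sigma_finite_def M.prob_space_axioms M.sigma_finite_measure_axioms
        prob_space_measure_pmf prob_space_imp_sigma_finite)
  obtain B where B: "\<And>y. \<bar>f y\<bar> \<le> B" using bdd_cont_bound[OF f] by blast
  have fm: "f \<in> borel_measurable borel" by (rule bdd_cont_meas[OF f])
  have int: "integrable (Bm p \<Otimes>\<^sub>M \<mu>) (\<lambda>x. f (mixmap x))"
    by (rule P.integrable_const_bound[where B=B]) (use B fm mixmap_meas'[OF L] in auto)
  have "(\<integral>x. f x \<partial>mix p \<mu>) = (\<integral>x. f (mixmap x) \<partial>(Bm p \<Otimes>\<^sub>M \<mu>))"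
    unfolding mix_def by (rule integral_distr[OF mixmap_meas'[OF L] fm])
  also have "\<dots> = (\<integral>b. (\<integral>y. f (mixmap (b, y)) \<partial>\<mu>) \<partial>Bm p)"
    by (rule PP.integral_fst'[OF int, symmetric])
  also have "\<dots> = (\<integral>y. f (mixmap (True, y)) \<partial>\<mu>) * p + (\<integral>y. f (mixmap (False, y)) \<partial>\<mu>) * (1 - p)"
    using p by simp
  also have "\<dots> = (\<integral>x. f x \<partial>\<mu>) * p + f zero * (1 - p)"
    by (simp add: mixmap_def M.prob_space)
  finally show ?thesis .
qed

lemma shift_zero: "shift zero = zero" by (simp add: shift_def zero_def)

lemma mix_stat: assumes S: "\<mu> \<in> stationary_laws" shows "mix p \<mu> \<in> stationary_laws"
proof -
  have L: "\<mu> \<in> laws" and Sh: "distr \<mu> borel shift = \<mu>" using S by (auto simp: stationary_laws_def)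
  interpret M: prob_space \<mu> using lawsD[OF L] by auto
  interpret Bp: prob_space "Bm p" by (rule prob_space_measure_pmf)
  let ?h = "\<lambda>(b, y). (b, shift y)"
  have c: "shift \<circ> mixmap = mixmap \<circ> ?h" by (auto simp: mixmap_def shift_zero)
  have pm: "distr (Bm p) (Bm p) (\<lambda>x. x) \<Otimes>\<^sub>M distr \<mu> borel shift = distr (Bm p \<Otimes>\<^sub>M \<mu>) (Bm p \<Otimes>\<^sub>M borel) (\<lambda>(x, y). (x, shift y))"
    by (rule pair_measure_distr) (auto simp: meas_law[OF L] Sh M.sigma_finite_measure_axioms)
  have hm: "?h \<in> measurable (Bm p \<Otimes>\<^sub>M \<mu>) (Bm p \<Otimes>\<^sub>M borel)"
  proof -
    have "?h \<in> measurable (Bm p \<Otimes>\<^sub>M borel) (Bm p \<Otimes>\<^sub>M borel)" by measurable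
    moreover have "sets (Bm p \<Otimes>\<^sub>M \<mu>) = sets (Bm p \<Otimes>\<^sub>M (borel :: config measure))"
      using lawsD(1)[OF L] by (intro sets_pair_measure_cong) auto
    ultimately show ?thesis using measurable_cong_sets by blast
  qed
  have "distr (mix p \<mu>) borel shift = distr (Bm p \<Otimes>\<^sub>M \<mu>) borel (shift \<circ> mixmap)"
    unfolding mix_def by (subst distr_distr) (auto simp: mixmap_meas'[OF L])
  also have "\<dots> = distr (distr (Bm p \<Otimes>\<^sub>M \<mu>) (Bm p \<Otimes>\<^sub>M borel) ?h) borel mixmap"
    unfolding c by (subst distr_distr[OF mixmap_meas hm]) rule
  also have "\<dots> = mix p \<mu>" unfolding pm[symmetric] Sh distr_id mix_def ..
  finally show ?thesis using mix_law[OF L] by (simp add: stationary_laws_def)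
qed

lemma nz_nonneg: "0 \<le> nz \<nu>" by (simp add: nz_def)

lemma mix_nz: assumes L: "\<mu> \<in> laws" and p: "0 \<le> p" "p \<le> 1" shows "nz (mix p \<mu>) \<le> p"
proof -
  interpret M: prob_space \<mu> using lawsD[OF L] by auto
  interpret P: prob_space "Bm p \<Otimes>\<^sub>M \<mu>"
    by (intro prob_space_pair prob_space_measure_pmf M.prob_space_axioms)
  have sp: "space (Bm p \<Otimes>\<^sub>M \<mu>) = UNIV" by (simp add: space_pair_measure lawsD(3)[OF L])
  have "nz (mix p \<mu>) = measure (Bm p \<Otimes>\<^sub>M \<mu>) (mixmap -` nzs \<inter> space (Bm p \<Otimes>\<^sub>M \<mu>))"
    unfolding nz_def mix_def by (rule measure_distr) (auto simp: mixmap_meas'[OF L])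
  also have "\<dots> \<le> measure (Bm p \<Otimes>\<^sub>M \<mu>) ({True} \<times> space \<mu>)"
  proof (rule P.finite_measure_mono)
    show "mixmap -` nzs \<inter> space (Bm p \<Otimes>\<^sub>M \<mu>) \<subseteq> {True} \<times> space \<mu>"
      by (auto simp: mixmap_def nzs_def zero_def sp lawsD(3)[OF L] split: if_splits)
    show "{True} \<times> space \<mu> \<in> P.events" by (intro pair_measureI) auto
  qed
  also have "\<dots> = p"
    using M.emeasure_pair_measure_Times[of "{True}" "Bm p" "space \<mu>"] p
    by (simp add: measure_def M.emeasure_space_1 emeasure_pmf_single)
  finally show ?thesis .
qed

lemma nz_F: "\<rho> \<in> laws \<Longrightarrow> nz (F \<rho>) \<le> (nz \<rho>)\<^sup>2"
proof -
  assume L: "\<rho> \<in> laws"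
  have "nz (F \<rho>) \<le> (nz (F_b \<rho>))\<^sup>2" by (simp add: F_def nz_F_A F_b_law[OF L])
  also have "\<dots> \<le> (nz \<rho>)\<^sup>2" by (intro power_mono nz_F_b[OF L] nz_nonneg)
  finally show ?thesis .
qed

lemma nz_Fhat: "\<rho> \<in> laws \<Longrightarrow> nz (F_hat \<rho>) \<le> (nz \<rho>)\<^sup>2"
proof -
  assume L: "\<rho> \<in> laws"
  have "nz (F_hat \<rho>) \<le> nz (F_A \<rho>)" by (simp add: F_hat_def nz_F_b F_A_law[OF L])
  also have "\<dots> \<le> (nz \<rho>)\<^sup>2" by (rule nz_F_A[OF L])
  finally show ?thesis .
qed

lemma nz_iter:
  assumes GL: "\<And>\<rho>. \<rho> \<in> laws \<Longrightarrow> G \<rho> \<in> laws" and GS: "\<And>\<rho>. \<rho> \<in> laws \<Longrightarrow> nz (G \<rho>) \<le> (nz \<rho>)\<^sup>2"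
    and L: "\<nu> \<in> laws" and q: "nz \<nu> \<le> q" "q \<le> 1"
  shows "(G ^^ n) \<nu> \<in> laws \<and> nz ((G ^^ n) \<nu>) \<le> q ^ Suc n"
proof (induction n)
  case 0 then show ?case using L q by simp
next
  case (Suc n)
  have q0: "0 \<le> q" using q(1) nz_nonneg order_trans by blast
  have "nz ((G ^^ Suc n) \<nu>) \<le> (nz ((G ^^ n) \<nu>))\<^sup>2" using GS Suc by simp
  also have "\<dots> \<le> (q ^ Suc n)\<^sup>2" using Suc nz_nonneg by (intro power_mono) auto
  also have "\<dots> = q ^ (2 * Suc n)" by (metis power_mult mult.commute)
  also have "\<dots> \<le> q ^ Suc (Suc n)" by (rule power_decreasing) (use q q0 in auto)
  finally show ?case using Suc GL by simp
qed

lemma conv_of_nz: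
  assumes GL: "\<And>\<rho>. \<rho> \<in> laws \<Longrightarrow> G \<rho> \<in> laws" and GS: "\<And>\<rho>. \<rho> \<in> laws \<Longrightarrow> nz (G \<rho>) \<le> (nz \<rho>)\<^sup>2"
    and L: "\<nu> \<in> laws" and q: "nz \<nu> \<le> q" "q < 1"
  shows "weak_conv (\<lambda>n. (G ^^ n) \<nu>) delta0"
proof (rule weak_conv_crit[where c = "\<lambda>n. q ^ Suc n"])
  have q0: "0 \<le> q" using q(1) nz_nonneg order_trans by blast
  note I = nz_iter[OF GL GS L q(1)] 
  show "(G ^^ n) \<nu> \<in> laws" for n using I q by simp
  show "cp ((G ^^ n) \<nu>) k \<le> q ^ Suc n" for n k
    using I[of n] q cp_nz by (meson less_imp_le order_trans)
  have "(\<lambda>n. q * q ^ n) \<longlonglongrightarrow> q * 0"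
    using q q0 by (intro tendsto_mult tendsto_const LIMSEQ_power_zero) auto
  then show "(\<lambda>n. q ^ Suc n) \<longlonglongrightarrow> 0" by simp
qed

lemma mix_in: assumes S: "\<mu> \<in> stationary_laws" and p: "0 \<le> p" "p < 1"
  shows "mix p \<mu> \<in> D0" "mix p \<mu> \<in> D0_hat"
proof -
  have L: "\<mu> \<in> laws" using S by (simp add: stationary_laws_def)
  have St: "mix p \<mu> \<in> stationary_laws" by (rule mix_stat[OF S])
  have Lm: "mix p \<mu> \<in> laws" by (rule mix_law[OF L])
  have n: "nz (mix p \<mu>) \<le> p" using mix_nz[OF L] p by simp
  show "mix p \<mu> \<in> D0" unfolding D0_def
    using St conv_of_nz[OF _ nz_F Lm n p(2)] F_law by auto
  show "mix p \<mu> \<in> D0_hat" unfolding D0_hat_def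
    using St conv_of_nz[OF _ nz_Fhat Lm n p(2)] F_law by auto
qed

lemma gen_ev:
  assumes "generate_topology_on {{\<mu> \<in> laws. (\<integral>x. f x \<partial>\<mu>) \<in> U} | f U. bdd_cont f \<and> open U} W"
    and "\<mu> \<in> W"
    and A: "\<And>f. bdd_cont f \<Longrightarrow> (\<lambda>j. \<integral>x. f x \<partial>\<nu> j) \<longlonglongrightarrow> (\<integral>x. f x \<partial>\<mu>)"
    and NL: "\<And>j. \<nu> j \<in> laws"
  shows "eventually (\<lambda>j. \<nu> j \<in> W) sequentially"
  using assms(1,2)
proof (induction rule: generate_topology_on.induct)
  case Empty then show ?case by simp
next
  case (Int a b)
  then show ?case by (auto intro: eventually_conj)
next
  case (UN K)
  then obtain k where "k \<in> K" "\<mu> \<in> k" by blast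
  with UN.IH[OF this] show ?case by (auto elim: eventually_mono)
next
  case (Basis s)
  then obtain f U where s: "s = {\<mu> \<in> laws. (\<integral>x. f x \<partial>\<mu>) \<in> U}" and f: "bdd_cont f" and U: "open U" by blast
  have "(\<integral>x. f x \<partial>\<mu>) \<in> U" using Basis.prems s by simp
  then have "eventually (\<lambda>j. (\<integral>x. f x \<partial>\<nu> j) \<in> U) sequentially"
    by (rule topological_tendstoD[OF A[OF f] U])
  then show ?case using NL by (auto simp: s elim: eventually_mono)
qed

definition pj :: "nat \<Rightarrow> real" where "pj j = 1 - (1/2) ^ Suc j"

lemma pj_bounds: "0 \<le> pj j" "pj j < 1"
proof -
  have a: "(1/2::real) ^ Suc j \<le> 1" by (rule power_le_one) auto
  have b: "0 < (1/2::real) ^ Suc j" by simp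
  show "0 \<le> pj j" "pj j < 1" using a b by (auto simp: pj_def)
qed

lemma pj_lim: "pj \<longlonglongrightarrow> 1"
proof -
  have "(\<lambda>j. (1/2::real) * (1/2) ^ j) \<longlonglongrightarrow> (1/2) * 0"
    by (intro tendsto_mult tendsto_const LIMSEQ_power_zero) auto
  then have "(\<lambda>j. 1 - (1/2::real) ^ Suc j) \<longlonglongrightarrow> 1 - 0"
    by (intro tendsto_diff tendsto_const) simp
  then show ?thesis by (simp add: pj_def[abs_def])
qed

lemma density:
  assumes DS: "D \<subseteq> stationary_laws" and M: "\<And>\<mu> j. \<mu> \<in> stationary_laws \<Longrightarrow> mix (pj j) \<mu> \<in> D"
  shows "(subtopology weak_topology stationary_laws) closure_of D = stationary_laws"
proof (rule equalityI)
  have ts: "topspace (subtopology weak_topology stationary_laws) = stationary_laws"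
    using stat_sub by auto
  show "subtopology weak_topology stationary_laws closure_of D \<subseteq> stationary_laws"
    using closure_of_subset_topspace ts by metis
  show "stationary_laws \<subseteq> subtopology weak_topology stationary_laws closure_of D"
  proof
    fix \<mu> assume S: "\<mu> \<in> stationary_laws"
    have L: "\<mu> \<in> laws" using S by (simp add: stationary_laws_def)
    show "\<mu> \<in> subtopology weak_topology stationary_laws closure_of D"
      unfolding in_closure_of ts
    proof (intro conjI allI impI S)
      fix T assume T: "\<mu> \<in> T \<and> openin (subtopology weak_topology stationary_laws) T"
      then obtain T' where T': "openin weak_topology T'" "T = T' \<inter> stationary_laws"
        unfolding openin_subtopology by blast
      have gen: "generate_topology_on {{\<mu> \<in> laws. (\<integral>x. f x \<partial>\<mu>) \<in> U} | f U. bdd_cont f \<and> open U} T'"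
        using T'(1) unfolding weak_topology_def by (rule openin_topology_generated_by)
      have A: "(\<lambda>j. \<integral>x. f x \<partial>mix (pj j) \<mu>) \<longlonglongrightarrow> (\<integral>x. f x \<partial>\<mu>)" if f: "bdd_cont f" for f
      proof -
        have "(\<lambda>j. (\<integral>x. f x \<partial>\<mu>) * pj j + f zero * (1 - pj j)) \<longlonglongrightarrow> (\<integral>x. f x \<partial>\<mu>) * 1 + f zero * (1 - 1)"
          by (intro tendsto_intros pj_lim)
        moreover have "(\<integral>x. f x \<partial>mix (pj j) \<mu>) = (\<integral>x. f x \<partial>\<mu>) * pj j + f zero * (1 - pj j)" for j
          using mix_int[OF L f] pj_bounds[of j] by simp
        ultimately show ?thesis by simp
      qed
      have "eventually (\<lambda>j. mix (pj j) \<mu> \<in> T') sequentially"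
        by (rule gen_ev[OF gen _ A mix_law[OF L]]) (use T T' in auto)
      then obtain j where "mix (pj j) \<mu> \<in> T'" by (auto dest: eventually_happens)
      moreover have "mix (pj j) \<mu> \<in> D" by (rule M[OF S])
      ultimately show "\<exists>y. y \<in> D \<and> y \<in> T" using DS T'(2) by blast
    qed
  qed
qed

theorem proposition19:
  shows "openin (subtopology weak_topology stationary_laws) D0 \<and>
         (subtopology weak_topology stationary_laws) closure_of D0 = stationary_laws \<and>
         openin (subtopology weak_topology stationary_laws) D0_hat \<and>
         (subtopology weak_topology stationary_laws) closure_of D0_hat = stationary_laws"
proof (intro conjI D0_open D0_hat_open)
  show "subtopology weak_topology stationary_laws closure_of D0 = stationary_laws"
  proof (rule density)
    show "D0 \<subseteq> stationary_laws" by (auto simp: D0_def)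
  next
    fix \<mu> j assume "\<mu> \<in> stationary_laws"
    then show "mix (pj j) \<mu> \<in> D0" using mix_in(1) pj_bounds by blast
  qed
  show "subtopology weak_topology stationary_laws closure_of D0_hat = stationary_laws"
  proof (rule density)
    show "D0_hat \<subseteq> stationary_laws" by (auto simp: D0_hat_def)
  next
    fix \<mu> j assume "\<mu> \<in> stationary_laws"
    then show "mix (pj j) \<mu> \<in> D0_hat" using mix_in(2) pj_bounds by blast
  qed
qed

end
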